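(* Let $k\geq 3$ be an odd integer and $n$ a positive integer with $n\geq \frac{k-1}{2}$. Then the pair $(2n,kn)$ is tame, i.e. for every integer $c>kn$ there exists a tame polynomial automorphism $F$ of $\mathbb{C}^3$ with $\operatorname{mdeg}F=(2n,kn,c)$.
   Context: For a polynomial automorphism $F=(F_1,\ldots,F_n)$ of $\mathbb{C}^n$, its multidegree is $\operatorname{mdeg}F:=(\deg F_1,\ldots,\deg F_n)$, where $\deg$ is total degree. A map is elementary if it changes one coordinate $X_j$ to $X_j+g$ with $g$ a polynomial in the other variables and fixes the remaining coordinates. A polynomial automorphism is tame if it is a composition of invertible affine-linear maps and elementary maps. A pair $(a,b)$ of positive integers with $a<b$ and $a\nmid b$ is called tame if for every integer $c>b$ there exists a tame polynomial automorphism of $\mathbb{C}^3$ with multidegree $(a,b,c)$. *)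

theory Defs
  imports Complex_Main "HOL-Library.Poly_Mapping"
begin

text \<open>Polynomials over the complex numbers in variables X_0, X_1, X_2, ... :
  finitely supported maps from monomials (exponent vectors) to coefficients.
  Only the variables X_0, X_1, X_2 are used for maps of C^3.\<close>

type_synonym mpoly = "(nat \<Rightarrow>\<^sub>0 nat) \<Rightarrow>\<^sub>0 complex"

definition Const :: "complex \<Rightarrow> mpoly" where
  "Const c = Poly_Mapping.single 0 c"

definition Var :: "nat \<Rightarrow> mpoly" where
  "Var i = Poly_Mapping.single (Poly_Mapping.single i 1) 1"

definition mon_deg :: "(nat \<Rightarrow>\<^sub>0 nat) \<Rightarrow> nat" where
  "mon_deg m = (\<Sum>i\<in>Poly_Mapping.keys m. Poly_Mapping.lookup m i)"

text \<open>Total degree (the zero polynomial gets degree 0; irrelevant here).\<close>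
definition tdeg :: "mpoly \<Rightarrow> nat" where
  "tdeg p = Max (insert 0 (mon_deg ` Poly_Mapping.keys p))"

definition vars :: "mpoly \<Rightarrow> nat set" where
  "vars p = (\<Union>m\<in>Poly_Mapping.keys p. Poly_Mapping.keys m)"

definition subst :: "(nat \<Rightarrow> mpoly) \<Rightarrow> mpoly \<Rightarrow> mpoly" where
  "subst G p = (\<Sum>m\<in>Poly_Mapping.keys p. Const (Poly_Mapping.lookup p m) * (\<Prod>i\<in>Poly_Mapping.keys m. G i ^ Poly_Mapping.lookup m i))"

text \<open>Polynomial maps: component i is F i; maps of C^3 use components 0,1,2
  and act as identity (X_i) on all components i >= 3. Composition F o G.\<close>
definition pcomp :: "(nat \<Rightarrow> mpoly) \<Rightarrow> (nat \<Rightarrow> mpoly) \<Rightarrow> (nat \<Rightarrow> mpoly)" where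
  "pcomp F G = (\<lambda>i. subst G (F i))"

definition affine_aut3 :: "(nat \<Rightarrow> mpoly) \<Rightarrow> bool" where
  "affine_aut3 F \<longleftrightarrow> (\<exists>A b. (\<exists>B. \<forall>i<3. \<forall>l<3.
        (\<Sum>j<3. A i j * B j l) = (if i = l then 1 else 0) \<and>
        (\<Sum>j<3. B i j * A j l) = (if i = l then 1 else 0)) \<and>
     F = (\<lambda>i. if i < 3 then Const (b i) + (\<Sum>j<3. Const (A i j) * Var j) else Var i))"

definition elementary3 :: "(nat \<Rightarrow> mpoly) \<Rightarrow> bool" where
  "elementary3 F \<longleftrightarrow> (\<exists>j g. j < 3 \<and> vars g \<subseteq> {0,1,2} - {j} \<and>
     F = Var(j := Var j + g))"

inductive tame3 :: "(nat \<Rightarrow> mpoly) \<Rightarrow> bool" where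
  affine: "affine_aut3 F \<Longrightarrow> tame3 F"
| elem: "elementary3 F \<Longrightarrow> tame3 F"
| comp: "tame3 F \<Longrightarrow> tame3 G \<Longrightarrow> tame3 (pcomp F G)"

definition mdeg3 :: "(nat \<Rightarrow> mpoly) \<Rightarrow> nat \<times> nat \<times> nat" where
  "mdeg3 F = (tdeg (F 0), tdeg (F 1), tdeg (F 2))"

definition tame_pair :: "nat \<Rightarrow> nat \<Rightarrow> bool" where
  "tame_pair a b \<longleftrightarrow> 0 < a \<and> a < b \<and> \<not> a dvd b \<and>
     (\<forall>c>b. \<exists>F. tame3 F \<and> mdeg3 F = (a, b, c))"

end

theory Submission
  imports Defs "HOL-Computational_Algebra.Formal_Power_Series"
begin


lemma Const_0[simp]: "Const 0 = 0" by (simp add: Const_def)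
lemma Const_1[simp]: "Const 1 = 1" by (simp add: Const_def)
lemma Const_add: "Const (a + b) = Const a + Const b" by (simp add: Const_def single_add)
lemma Const_diff: "Const (a - b) = Const a - Const b" by (simp add: Const_def single_diff)
lemma Const_mult: "Const (a * b) = Const a * Const b" by (simp add: Const_def mult_single)
lemma Const_of_nat: "Const (of_nat j) = of_nat j" by (simp add: Const_def)

definition mono :: "(nat \<Rightarrow> mpoly) \<Rightarrow> (nat \<Rightarrow>\<^sub>0 nat) \<Rightarrow> mpoly" where
  "mono G m = (\<Prod>i\<in>Poly_Mapping.keys m. G i ^ Poly_Mapping.lookup m i)"

lemma subst_alt: "subst G p = (\<Sum>m\<in>Poly_Mapping.keys p. Const (Poly_Mapping.lookup p m) * mono G m)"
  by (simp add: subst_def mono_def)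

lemma subst_add: "subst G (p + q) = subst G p + subst G q"
  unfolding subst_alt
  by (rule setsum_keys_plus_distrib) (auto simp: Const_add algebra_simps)

lemma subst_0[simp]: "subst G 0 = 0" by (simp add: subst_alt)

lemma subst_single: "subst G (Poly_Mapping.single m v) = Const v * mono G m"
  by (simp add: subst_alt)

lemma subst_sum: "finite A \<Longrightarrow> subst G (\<Sum>x\<in>A. f x) = (\<Sum>x\<in>A. subst G (f x))"
  by (induction A rule: finite_induct) (auto simp: subst_add)

lemma poly_expand: "(p::mpoly) = (\<Sum>m\<in>Poly_Mapping.keys p. Poly_Mapping.single m (Poly_Mapping.lookup p m))"
proof (rule poly_mapping_eqI)
  fix k
  show "Poly_Mapping.lookup p k = Poly_Mapping.lookup (\<Sum>m\<in>Poly_Mapping.keys p. Poly_Mapping.single m (Poly_Mapping.lookup p m)) k"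
    by (auto simp: lookup_sum lookup_single when_def in_keys_iff)
qed

lemma keys_add_nat: "Poly_Mapping.keys (a + b :: nat \<Rightarrow>\<^sub>0 nat) = Poly_Mapping.keys a \<union> Poly_Mapping.keys b"
  by (auto simp: in_keys_iff lookup_add)

lemma mono_ext: "finite S \<Longrightarrow> Poly_Mapping.keys m \<subseteq> S \<Longrightarrow>
   mono G m = (\<Prod>i\<in>S. G i ^ Poly_Mapping.lookup m i)"
  unfolding mono_def by (rule prod.mono_neutral_left) (auto simp: in_keys_iff)

lemma mono_add: "mono G (a + b) = mono G a * mono G b"
proof -
  let ?S = "Poly_Mapping.keys a \<union> Poly_Mapping.keys b"
  have "mono G (a + b) = (\<Prod>i\<in>?S. G i ^ Poly_Mapping.lookup (a+b) i)"
    by (rule mono_ext) (auto simp: keys_add_nat)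
  also have "\<dots> = (\<Prod>i\<in>?S. G i ^ Poly_Mapping.lookup a i) * (\<Prod>i\<in>?S. G i ^ Poly_Mapping.lookup b i)"
    by (simp add: lookup_add power_add prod.distrib)
  also have "\<dots> = mono G a * mono G b"
    by (simp add: mono_ext[of ?S a] mono_ext[of ?S b])
  finally show ?thesis .
qed

lemma mono_0[simp]: "mono G 0 = 1" by (simp add: mono_def)

lemma subst_mult: "subst G (p * q) = subst G p * subst G q"
proof -
  have "p * q = (\<Sum>a\<in>Poly_Mapping.keys p. \<Sum>b\<in>Poly_Mapping.keys q.
      Poly_Mapping.single a (Poly_Mapping.lookup p a) * Poly_Mapping.single b (Poly_Mapping.lookup q b))"
    by (subst poly_expand[of p], subst poly_expand[of q]) (simp add: sum_product)
  also have "\<dots> = (\<Sum>a\<in>Poly_Mapping.keys p. \<Sum>b\<in>Poly_Mapping.keys q.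
      Poly_Mapping.single (a + b) (Poly_Mapping.lookup p a * Poly_Mapping.lookup q b))"
    by (simp add: mult_single)
  finally have pq: "p * q = \<dots>" .
  show ?thesis
    unfolding pq
    by (simp add: subst_sum subst_single mono_add Const_mult sum_product subst_alt[of G p] subst_alt[of G q] algebra_simps)
qed

lemma subst_Const[simp]: "subst G (Const c) = Const c"
  by (simp add: Const_def subst_single)

lemma subst_1[simp]: "subst G 1 = 1"
  using subst_Const[of G 1] by simp

lemma subst_Var[simp]: "subst G (Var i) = G i"
  by (simp add: Var_def subst_single mono_def)

lemma subst_uminus: "subst G (- p) = - subst G p"
  using subst_add[of G p "-p"] by (simp add: eq_neg_iff_add_eq_0 add.commute)

lemma subst_diff: "subst G (p - q) = subst G p - subst G q"
  using subst_add[of G p "-q"] by (simp add: subst_uminus)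

lemma subst_pow: "subst G (p ^ j) = subst G p ^ j"
  by (induction j) (auto simp: subst_mult)




definition dle :: "mpoly \<Rightarrow> nat \<Rightarrow> bool" where
  "dle p D \<longleftrightarrow> (\<forall>m\<in>Poly_Mapping.keys p. mon_deg m \<le> D)"

lemma mon_deg_add: "mon_deg (a + b) = mon_deg a + mon_deg b"
  unfolding mon_deg_def by (rule setsum_keys_plus_distrib) auto

lemma mon_deg_single[simp]: "mon_deg (Poly_Mapping.single i j) = j"
  by (simp add: mon_deg_def)

lemma mon_deg_0[simp]: "mon_deg 0 = 0"
  by (simp add: mon_deg_def)

lemma tdeg_le: "dle p D \<Longrightarrow> tdeg p \<le> D"
  by (auto simp: tdeg_def dle_def)

lemma tdeg_ge: "Poly_Mapping.lookup p m \<noteq> 0 \<Longrightarrow> mon_deg m \<le> tdeg p"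
  unfolding tdeg_def by (rule Max_ge) (auto simp: in_keys_iff)

lemma keys_uminus': "Poly_Mapping.keys (- (p::mpoly)) = Poly_Mapping.keys p"
  by (auto simp: in_keys_iff)

lemma dle_mono: "dle p D \<Longrightarrow> D \<le> D' \<Longrightarrow> dle p D'"
  by (auto simp: dle_def)

lemma dle_add: "dle p D \<Longrightarrow> dle q D \<Longrightarrow> dle (p + q) D"
  using keys_add[of p q] by (auto simp: dle_def)

lemma dle_uminus: "dle p D \<Longrightarrow> dle (- p) D"
  by (simp add: dle_def keys_uminus')

lemma dle_diff: "dle p D \<Longrightarrow> dle q D \<Longrightarrow> dle (p - q) D"
  using dle_add[of p D "-q"] dle_uminus[of q D] by simp

lemma dle_mult: "dle p D1 \<Longrightarrow> dle q D2 \<Longrightarrow> dle (p * q) (D1 + D2)"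
  using keys_mult[of p q] by (force simp: dle_def mon_deg_add intro: add_mono)

lemma dle_pow: "dle p D \<Longrightarrow> dle (p ^ j) (j * D)"
proof (induction j)
  case 0 then show ?case by (simp add: dle_def)
next
  case (Suc j) then show ?case using dle_mult[of p D "p^j" "j*D"] by simp
qed

lemma dle_Const: "dle (Const c) 0"
  by (simp add: dle_def Const_def)

lemma dle_Var: "dle (Var i) 1"
  by (simp add: dle_def Var_def)

lemma dle_sum: "finite A \<Longrightarrow> (\<And>x. x \<in> A \<Longrightarrow> dle (f x) D) \<Longrightarrow> dle (\<Sum>x\<in>A. f x) D"
proof (induction A rule: finite_induct)
  case empty then show ?case by (simp add: dle_def)
next
  case (insert x F) then show ?case by (simp add: dle_add)
qed

definition inI :: "mpoly \<Rightarrow> bool" where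
  "inI p \<longleftrightarrow> (\<forall>m\<in>Poly_Mapping.keys p. Poly_Mapping.lookup m 0 \<noteq> 0 \<or> Poly_Mapping.lookup m 1 \<noteq> 0)"

lemma inI_0[simp]: "inI 0" by (simp add: inI_def)

lemma inI_add: "inI p \<Longrightarrow> inI q \<Longrightarrow> inI (p + q)"
  using keys_add[of p q] unfolding inI_def by blast

lemma inI_uminus: "inI p \<Longrightarrow> inI (- p)"
  by (simp add: inI_def keys_uminus')

lemma inI_diff: "inI p \<Longrightarrow> inI q \<Longrightarrow> inI (p - q)"
  using inI_add[of p "-q"] inI_uminus[of q] by simp

lemma inI_multL: "inI p \<Longrightarrow> inI (p * q)"
  using keys_mult[of p q] by (force simp: inI_def lookup_add)

lemma inI_multR: "inI q \<Longrightarrow> inI (p * q)"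
  using inI_multL[of q p] by (simp add: mult.commute)

lemma inI_Var0: "inI (Var 0)" by (simp add: inI_def Var_def)
lemma inI_Var1: "inI (Var 1)" by (simp add: inI_def Var_def)

lemma inI_sum: "finite A \<Longrightarrow> (\<And>x. x \<in> A \<Longrightarrow> inI (f x)) \<Longrightarrow> inI (\<Sum>x\<in>A. f x)"
proof (induction A rule: finite_induct)
  case empty then show ?case by simp
next
  case (insert x F) then show ?case by (simp add: inI_add)
qed

lemma cong_add: "inI (p1 - q1) \<Longrightarrow> inI (p2 - q2) \<Longrightarrow> inI ((p1 + p2) - (q1 + q2))"
  using inI_add[of "p1 - q1" "p2 - q2"] by (simp add: algebra_simps)

lemma cong_diff: "inI (p1 - q1) \<Longrightarrow> inI (p2 - q2) \<Longrightarrow> inI ((p1 - p2) - (q1 - q2))"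
  using inI_diff[of "p1 - q1" "p2 - q2"] by (simp add: algebra_simps)

lemma cong_mult: "inI (p1 - q1) \<Longrightarrow> inI (p2 - q2) \<Longrightarrow> inI (p1 * p2 - q1 * q2)"
proof -
  assume a: "inI (p1 - q1)" "inI (p2 - q2)"
  have "p1 * p2 - q1 * q2 = (p1 - q1) * p2 + q1 * (p2 - q2)" by (simp add: algebra_simps)
  then show ?thesis using a by (simp add: inI_add inI_multL inI_multR)
qed

lemma cong_pow: "inI (p - q) \<Longrightarrow> inI (p ^ j - q ^ j)"
  by (induction j) (auto intro: cong_mult)

lemma cong_refl: "inI (p - p)" by simp

lemma inI_lookupZ: "inI p \<Longrightarrow> Poly_Mapping.lookup p (Poly_Mapping.single 2 j) = 0"
proof (rule ccontr)
  assume a: "inI p" "Poly_Mapping.lookup p (Poly_Mapping.single 2 j) \<noteq> 0"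
  then have "Poly_Mapping.single 2 j \<in> Poly_Mapping.keys p" by (simp add: in_keys_iff)
  with a(1) show False unfolding inI_def by (auto simp: lookup_single_not_eq)
qed

lemma Var_pow: "Var i ^ j = Poly_Mapping.single (Poly_Mapping.single i j) 1"
proof (induction j)
  case 0 then show ?case by simp
next
  case (Suc j) then show ?case by (simp add: Var_def mult_single single_add[symmetric])
qed




definition Wp :: "nat \<Rightarrow> mpoly" where "Wp n = Var 2 ^ (2 * n)"

definition H :: "nat \<Rightarrow> nat \<Rightarrow> (nat \<Rightarrow> complex) \<Rightarrow> mpoly" where
  "H n K a = (\<Sum>i\<le>K. Const (a i) * Var 0 ^ i * Wp n ^ (K - i))"

definition conv :: "(nat \<Rightarrow> complex) \<Rightarrow> (nat \<Rightarrow> complex) \<Rightarrow> nat \<Rightarrow> complex" where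
  "conv a b s = (\<Sum>j\<le>s. a j * b (s - j))"

lemma Const_sum: "finite A \<Longrightarrow> Const (\<Sum>x\<in>A. f x) = (\<Sum>x\<in>A. Const (f x))"
  by (induction A rule: finite_induct) (auto simp: Const_add)

lemma H_mult:
  assumes a: "\<And>i. i > K \<Longrightarrow> a i = 0" and b: "\<And>i. i > L \<Longrightarrow> b i = 0"
  shows "H n K a * H n L b = H n (K + L) (conv a b)"
proof -
  define g where "g i j = Const (a i * b j) * Var 0 ^ (i + j) * Wp n ^ (K + L - (i + j))" for i j
  have "H n K a * H n L b = (\<Sum>i\<le>K. \<Sum>j\<le>L. g i j)"
    unfolding H_def sum_product
  proof (intro sum.cong refl)
    fix i j assume "i \<in> {..K}" "j \<in> {..L}"
    then have "K + L - (i + j) = (K - i) + (L - j)" by auto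
    then show "Const (a i) * Var 0 ^ i * Wp n ^ (K - i) * (Const (b j) * Var 0 ^ j * Wp n ^ (L - j)) = g i j"
      unfolding g_def by (simp add: Const_mult power_add algebra_simps)
  qed
  also have "\<dots> = (\<Sum>(i,j)\<in>{..K} \<times> {..L}. g i j)"
    by (simp add: sum.cartesian_product)
  also have "\<dots> = (\<Sum>(i,j)\<in>{(i,j). i + j \<le> K + L}. g i j)"
  proof (rule sum.mono_neutral_left)
    show "finite {(i, j). i + j \<le> K + L}"
    proof (rule finite_subset)
      show "{(i, j). i + j \<le> K + L} \<subseteq> {..K+L} \<times> {..K+L}" by auto
    qed auto
    show "{..K} \<times> {..L} \<subseteq> {(i, j). i + j \<le> K + L}" by auto
    show "\<forall>x\<in>{(i, j). i + j \<le> K + L} - {..K} \<times> {..L}. (case x of (i, j) \<Rightarrow> g i j) = 0"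
    proof
      fix x assume "x \<in> {(i, j). i + j \<le> K + L} - {..K} \<times> {..L}"
      then obtain i j where x: "x = (i,j)" and "\<not> (i \<le> K \<and> j \<le> L)" by auto
      then have "a i * b j = 0" using a b by (auto simp: not_le)
      then show "(case x of (i, j) \<Rightarrow> g i j) = 0" unfolding x g_def by (metis Const_0 mult_zero_left split_conv)
    qed
  qed
  also have "\<dots> = (\<Sum>s\<le>K+L. \<Sum>i\<le>s. g i (s - i))"
    by (rule sum.triangle_reindex_eq)
  also have "\<dots> = H n (K + L) (conv a b)"
    unfolding H_def conv_def
    by (intro sum.cong refl) (simp add: g_def Const_sum sum_distrib_right)
  finally show ?thesis .
qed

lemma H_W:
  assumes "a (Suc K) = 0"
  shows "Wp n * H n K a = H n (Suc K) a"
proof -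
  have "Wp n * H n K a = (\<Sum>i\<le>K. Const (a i) * Var 0 ^ i * Wp n ^ (Suc K - i))"
    unfolding H_def sum_distrib_left
    by (intro sum.cong refl) (simp add: Suc_diff_le algebra_simps)
  also have "\<dots> = H n (Suc K) a"
    unfolding H_def using assms by simp
  finally show ?thesis .
qed

lemma H_binom: "(Var 0 + Wp n) ^ k = H n k (\<lambda>i. of_nat (k choose i))"
  unfolding H_def binomial_ring by (simp add: Const_of_nat)

lemma H_diff: "H n K a - H n K b = H n K (\<lambda>i. a i - b i)"
  unfolding H_def by (simp add: Const_diff sum_subtractf algebra_simps)

lemma arith_aux:
  fixes n i J K :: nat
  assumes "n \<ge> 1" "J \<le> i" "i \<le> K"
  shows "i + 2 * n * (K - i) \<le> J + 2 * n * (K - J)"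
proof -
  have "K - J = (K - i) + (i - J)" using assms by auto
  then have "2 * n * (K - J) = 2 * n * (K - i) + 2 * n * (i - J)" by (simp add: algebra_simps)
  moreover have "2 * n * (i - J) \<ge> i - J" using assms(1) by simp
  ultimately show ?thesis using assms by linarith
qed

lemma H_dle:
  assumes "n \<ge> 1" "J \<le> K" "\<And>i. i < J \<Longrightarrow> a i = 0"
  shows "dle (H n K a) (J + 2 * n * (K - J))"
  unfolding H_def
proof (rule dle_sum)
  fix i assume i: "i \<in> {..K}"
  show "dle (Const (a i) * Var 0 ^ i * Wp n ^ (K - i)) (J + 2 * n * (K - J))"
  proof (cases "i < J")
    case True then show ?thesis using assms by (simp add: dle_def)
  next
    case False
    have "dle (Const (a i) * Var 0 ^ i * Wp n ^ (K - i)) (0 + i * 1 + (K - i) * ((2 * n) * 1))"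
      unfolding Wp_def by (intro dle_mult dle_pow dle_Const dle_Var)
    then show ?thesis
    proof (rule dle_mono)
      have "i + 2 * n * (K - i) \<le> J + 2 * n * (K - J)"
        using arith_aux[of n J i K] assms i False by auto
      then show "0 + i * 1 + (K - i) * (2 * n * 1) \<le> J + 2 * n * (K - J)"
        by (simp add: mult.commute)
    qed
  qed
qed simp




lemma vars_add: "vars p \<subseteq> S \<Longrightarrow> vars q \<subseteq> S \<Longrightarrow> vars (p + q) \<subseteq> S"
  using keys_add[of p q] unfolding vars_def by blast

lemma vars_uminus: "vars p \<subseteq> S \<Longrightarrow> vars (- p) \<subseteq> S"
  unfolding vars_def by (simp add: keys_uminus')

lemma vars_diff: "vars p \<subseteq> S \<Longrightarrow> vars q \<subseteq> S \<Longrightarrow> vars (p - q) \<subseteq> S"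
  using vars_add[of p S "-q"] vars_uminus[of q S] by simp

lemma vars_mult: "vars p \<subseteq> S \<Longrightarrow> vars q \<subseteq> S \<Longrightarrow> vars (p * q) \<subseteq> S"
  using keys_mult[of p q] unfolding vars_def by (force simp: keys_add_nat)

lemma vars_1: "vars 1 \<subseteq> S" by (simp add: vars_def)

lemma vars_pow: "vars p \<subseteq> S \<Longrightarrow> vars (p ^ j) \<subseteq> S"
  by (induction j) (auto simp: vars_1 vars_mult)

lemma vars_Const: "vars (Const c) \<subseteq> S" by (simp add: vars_def Const_def)

lemma vars_Var: "i \<in> S \<Longrightarrow> vars (Var i) \<subseteq> S" by (simp add: vars_def Var_def)

lemma vars_sum: "finite A \<Longrightarrow> (\<And>x. x \<in> A \<Longrightarrow> vars (f x) \<subseteq> S) \<Longrightarrow> vars (\<Sum>x\<in>A. f x) \<subseteq> S"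
proof (induction A rule: finite_induct)
  case empty then show ?case by (simp add: vars_def)
next
  case (insert x F) then show ?case by (simp add: vars_add)
qed

lemma cong_lookup: "inI (p - q) \<Longrightarrow> Poly_Mapping.lookup p (Poly_Mapping.single 2 j) = Poly_Mapping.lookup q (Poly_Mapping.single 2 j)"
  using inI_lookupZ[of "p - q" j] by (simp add: lookup_minus)

lemma lookup_Zpow: "Poly_Mapping.lookup (Var 2 ^ i) (Poly_Mapping.single 2 j) = (if i = j then 1 else 0)"
  by (simp add: Var_pow lookup_single when_def inj_eq[OF inj_single])

lemma inI_X_term: "inI (Const a * Var 0 ^ Suc i * q)"
proof -
  have "Const a * Var 0 ^ Suc i * q = Var 0 * (Const a * Var 0 ^ i * q)" by (simp add: algebra_simps)
  then show ?thesis by (metis inI_multL inI_Var0)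
qed

definition cc :: "nat \<Rightarrow> nat \<Rightarrow> nat \<Rightarrow> complex" where
  "cc k m i = (if i \<le> m then (of_nat k / 2) gchoose i else 0)"

lemma conv_cc_low:
  assumes "i \<le> m"
  shows "conv (cc k m) (cc k m) i = of_nat (k choose i)"
proof -
  have "conv (cc k m) (cc k m) i = (\<Sum>j\<in>{0..i}. ((of_nat k / 2) gchoose j) * ((of_nat k / 2) gchoose (i - j)))"
    unfolding conv_def cc_def atLeast0AtMost[symmetric] using assms by (intro sum.cong) auto
  also have "\<dots> = ((of_nat k / 2 + of_nat k / 2) gchoose i)"
    by (rule gbinomial_Vandermonde)
  also have "\<dots> = of_nat (k choose i)"
    by (simp add: binomial_gbinomial)
  finally show ?thesis .
qed

lemma conv_cc_high: "conv (cc k m) (cc k m) (Suc (2 * m)) = 0"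
  unfolding conv_def cc_def by (intro sum.neutral) auto

lemma cc_0: "cc k m 0 = 1" by (simp add: cc_def)




lemma P_alg: fixes z :: "'a::comm_ring_1"
  shows "z^1 + (z^a * (z^b + z^e + z^e + z^f) - z^(a+b)) = z^1 + z^(a+e) + z^(a+e) + z^(a+f)"
  by (simp add: power_add algebra_simps)

lemma sq_alg: fixes z :: "'a::comm_ring_1"
  shows "(z^a + z^b)^2 = z^(2*a) + z^(a+b) + z^(a+b) + z^(2*b)"
proof -
  have "(z^a + z^b)^2 = z^a*z^a + z^a*z^b + z^a*z^b + z^b*z^b" by (simp add: power2_eq_square algebra_simps)
  also have "\<dots> = z^(2*a) + z^(a+b) + z^(a+b) + z^(2*b)" by (simp only: power_add[symmetric] mult_2)
  finally show ?thesis .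
qed

lemma G_alg: fixes y a b f :: "'a::comm_ring_1"
  shows "(y + (a + b))^2 - f = y*y + y*(a+b) + y*(a+b) + (a^2 - f) + a*b + a*b + b*b"
  by (simp add: power2_eq_square algebra_simps)

lemma F2_alg: fixes z u v :: "'a::comm_ring_1"
  shows "z + (u^p * v^2 - u^(p+k)) = z + u^p * (v^2 - u^k)"
  by (simp add: power_add algebra_simps)

lemma r0_alg: fixes z h :: "'a::comm_ring_1"
  shows "(z^n * h)^2 = z^(2*n) * (h * h)"
proof -
  have "(z^n*h)^2 = (z^n)^2 * h^2" by (rule power_mult_distrib)
  also have "(z^n)^2 = z^(2*n)" by (simp add: power_mult[symmetric] mult.commute)
  finally show ?thesis by (simp add: power2_eq_square)
qed

lemma main:
  fixes k m n d p :: nat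
  assumes km: "k = Suc (2*m)" and m1: "1 \<le> m" and mn: "m \<le> n" and d1: "1 \<le> d" and dk: "d < k*n"
  shows "\<exists>F. tame3 F \<and> mdeg3 F = (2*n, k*n, k*n + d + 2*n*p)"
proof -
  have n1: "n \<ge> 1" using m1 mn by simp
  define c where "c = k*n + d + 2*n*p"
  define r0 where "r0 = Var 2 ^ n * H n m (cc k m)"
  define r where "r = r0 + Var 2 ^ d"
  define g where "g = Var 0 ^ p * Var 1 ^ 2 - Var 0 ^ (p + k)"
  define E1 where "E1 = Var(0 := Var 0 + Wp n)"
  define E2 where "E2 = Var(1 := Var 1 + r)"
  define E3 where "E3 = Var(2 := Var 2 + g)"
  define F where "F = pcomp E3 (pcomp E1 E2)"
  define F0 where "F0 = Var 0 + Wp n"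
  define F1 where "F1 = Var 1 + r"
  have F0: "F 0 = F0"
    unfolding F_def pcomp_def E1_def E2_def E3_def F0_def by (simp add: subst_add Wp_def subst_pow)
  have F1: "F 1 = F1"
    unfolding F_def pcomp_def E1_def E2_def E3_def F1_def by (simp add: subst_add)
  have F2: "F 2 = Var 2 + (F0^p * F1^2 - F0^(p+k))"
    unfolding F_def pcomp_def E1_def E2_def E3_def F1_def F0_def g_def
    by (simp add: subst_add subst_diff subst_mult subst_pow Wp_def)
  have vH: "vars (H n m (cc k m)) \<subseteq> S" if "0 \<in> S" "2 \<in> S" for S
    unfolding H_def Wp_def using that
    by (intro vars_sum vars_mult vars_pow vars_Var vars_Const) auto
  have tame: "tame3 F"
  proof -
    have e1: "elementary3 E1"
      unfolding elementary3_def E1_def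
      by (rule exI[of _ 0], rule exI[of _ "Wp n"]) (auto simp: Wp_def intro!: vars_pow vars_Var)
    have e2: "elementary3 E2"
      unfolding elementary3_def E2_def
    proof (rule exI[of _ 1], rule exI[of _ r])
      have "vars r \<subseteq> {0,1,2} - {1}" unfolding r_def r0_def
        by (intro vars_add vars_mult vars_pow vars_Var vH) auto
      then show "1 < (3::nat) \<and> vars r \<subseteq> {0, 1, 2} - {1} \<and> Var(1 := Var 1 + r) = Var(1 := Var 1 + r)"
        by simp
    qed
    have e3: "elementary3 E3"
      unfolding elementary3_def E3_def
    proof (rule exI[of _ 2], rule exI[of _ g])
      have "vars g \<subseteq> {0,1,2} - {2}" unfolding g_def
        by (intro vars_diff vars_mult vars_pow vars_Var) auto
      then show "2 < (3::nat) \<and> vars g \<subseteq> {0, 1, 2} - {2} \<and> Var(2 := Var 2 + g) = Var(2 := Var 2 + g)"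
        by simp
    qed
    show ?thesis unfolding F_def
      by (intro tame3.comp tame3.elem e1 e2 e3)
  qed
  have dF0: "dle F0 (2*n)"
  proof -
    have "dle (Var 0) (2*n)" by (rule dle_mono[OF dle_Var[of 0]]) (use n1 in simp)
    moreover have "dle (Var 2 ^ (2*n)) (2*n)" using dle_pow[OF dle_Var[of 2], of "2*n"] by simp
    ultimately show ?thesis unfolding F0_def Wp_def by (rule dle_add)
  qed
  have lF0: "Poly_Mapping.lookup F0 (Poly_Mapping.single 2 (2*n)) = 1"
  proof -
    have "inI (F0 - Var 2 ^ (2*n))" unfolding F0_def Wp_def by (simp add: inI_Var0)
    then show ?thesis by (simp add: cong_lookup lookup_Zpow)
  qed
  have tF0: "tdeg F0 = 2*n"
    using tdeg_le[OF dF0] tdeg_ge[of F0 "Poly_Mapping.single 2 (2*n)"] lF0 by simp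
  have kn: "k * n = n + 2 * n * m" using km by (simp add: algebra_simps)
  have dH: "dle (H n m (cc k m)) (2 * n * m)"
    using H_dle[of n 0 m "cc k m"] n1 by simp
  have dr0: "dle r0 (k*n)"
    unfolding r0_def kn using dle_mult[OF dle_pow[OF dle_Var[of 2], of n] dH] by simp
  have dZd: "dle (Var 2 ^ d) d" using dle_pow[OF dle_Var[of 2], of d] by simp
  have dF1: "dle F1 (k*n)"
    unfolding F1_def r_def
    using dk n1 km
    by (intro dle_add dr0 dle_mono[OF dle_Var] dle_mono[OF dZd]) auto
  have HI: "inI (H n m (cc k m) - Wp n ^ m)"
  proof -
    obtain m' where m': "m = Suc m'" using m1 by (cases m) auto
    have "H n m (cc k m) = Wp n ^ m + (\<Sum>i\<le>m'. Const (cc k m (Suc i)) * Var 0 ^ Suc i * Wp n ^ (m - Suc i))"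
      unfolding H_def m' sum.atMost_Suc_shift by (simp add: cc_0)
    moreover have "inI (\<Sum>i\<le>m'. Const (cc k m (Suc i)) * Var 0 ^ Suc i * Wp n ^ (m - Suc i))"
      by (intro inI_sum inI_X_term) auto
    ultimately show ?thesis by simp
  qed
  define Q where "Q = Var 2 ^ (k*n) + Var 2 ^ d"
  have cQ: "inI (F1 - Q)"
  proof -
    have "Var 2 ^ n * Wp n ^ m = Var 2 ^ (k * n)"
      unfolding Wp_def kn by (simp add: power_add power_mult)
    then have "F1 - Q = Var 1 + Var 2 ^ n * (H n m (cc k m) - Wp n ^ m)"
      unfolding F1_def Q_def r_def r0_def by (simp add: algebra_simps)
    then show ?thesis using inI_add[OF inI_Var1 inI_multR[OF HI]] by metis
  qed
  have lF1: "Poly_Mapping.lookup F1 (Poly_Mapping.single 2 (k*n)) = 1"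
    using cong_lookup[OF cQ] dk by (simp add: Q_def lookup_add lookup_Zpow)
  have tF1: "tdeg F1 = k*n"
    using tdeg_le[OF dF1] tdeg_ge[of F1 "Poly_Mapping.single 2 (k*n)"] lF1 by simp
  define E where "E = r0^2 - F0^k"
  have r0sq: "r0^2 = H n k (conv (cc k m) (cc k m))"
  proof -
    have "r0^2 = Wp n * (H n m (cc k m) * H n m (cc k m))"
      unfolding r0_def Wp_def by (rule r0_alg)
    also have "\<dots> = Wp n * H n (2*m) (conv (cc k m) (cc k m))"
      using H_mult[of m "cc k m" m "cc k m" n] by (simp add: cc_def mult_2)
    also have "\<dots> = H n k (conv (cc k m) (cc k m))"
      unfolding km by (rule H_W) (rule conv_cc_high)
    finally show ?thesis .
  qed
  have dE: "dle E (k*n + 1)"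
  proof -
    have "E = H n k (\<lambda>i. conv (cc k m) (cc k m) i - of_nat (k choose i))"
      unfolding E_def r0sq F0_def H_binom H_diff ..
    moreover have "dle (H n k (\<lambda>i. conv (cc k m) (cc k m) i - of_nat (k choose i))) (Suc m + 2 * n * (k - Suc m))"
      using n1 km by (intro H_dle) (auto simp: conv_cc_low)
    moreover have "Suc m + 2 * n * (k - Suc m) \<le> k*n + 1"
      using km mn kn by simp
    ultimately show ?thesis using dle_mono by metis
  qed
  define G where "G = F1^2 - F0^k"
  have Geq: "G = Var 1 * Var 1 + Var 1 * (r0 + Var 2 ^ d) + Var 1 * (r0 + Var 2 ^ d) + E
       + r0 * Var 2 ^ d + r0 * Var 2 ^ d + Var 2 ^ d * Var 2 ^ d"
    unfolding G_def E_def F1_def r_def by (rule G_alg)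
  have dG: "dle G (k*n + d)"
  proof -
    have a: "dle (Var 1) 1" by (rule dle_Var)
    have b: "dle (r0 + Var 2 ^ d) (k*n)" using dr0 dZd dk by (intro dle_add dle_mono[OF dZd]) auto
    have "dle (Var 1 * Var 1) (k*n+d)" by (rule dle_mono[OF dle_mult[OF a a]]) (use dk d1 in simp)
    moreover have "dle (Var 1 * (r0 + Var 2 ^ d)) (k*n+d)" by (rule dle_mono[OF dle_mult[OF a b]]) (use d1 in simp)
    moreover have "dle E (k*n+d)" by (rule dle_mono[OF dE]) (use d1 in simp)
    moreover have "dle (r0 * Var 2 ^ d) (k*n+d)" using dle_mult[OF dr0 dZd] by simp
    moreover have "dle (Var 2 ^ d * Var 2 ^ d) (k*n+d)" by (rule dle_mono[OF dle_mult[OF dZd dZd]]) (use dk in simp)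
    ultimately show ?thesis unfolding Geq by (intro dle_add) auto
  qed
  have F2G: "F 2 = Var 2 + F0^p * G"
    unfolding F2 G_def by (rule F2_alg)
  have dF2: "dle (F 2) c"
  proof -
    have "dle (F0^p * G) (p * (2*n) + (k*n + d))" by (intro dle_mult dle_pow dF0 dG)
    then have "dle (F0^p * G) c" by (rule dle_mono) (simp add: c_def)
    moreover have "dle (Var 2) c" using dle_Var[of 2] by (rule dle_mono) (use d1 in \<open>simp add: c_def\<close>)
    ultimately show ?thesis unfolding F2G by (intro dle_add)
  qed
  define P where "P = Var 2 + (Wp n ^ p * Q^2 - Wp n ^ (p+k))"
  have cP: "inI (F 2 - P)"
  proof -
    have c0: "inI (F0 - Wp n)" unfolding F0_def by (simp add: inI_Var0)
    show ?thesis unfolding F2 P_def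
      by (intro cong_add cong_refl cong_diff cong_mult cong_pow c0 cQ)
  qed
  have Peq: "P = Var 2 ^ 1 + Var 2 ^ c + Var 2 ^ c + Var 2 ^ (2*n*p + 2*d)"
  proof -
    have w1: "Wp n ^ p = Var 2 ^ (2*n*p)" unfolding Wp_def by (simp only: power_mult)
    have w2: "Wp n ^ (p+k) = Var 2 ^ (2*n*p + 2*(k*n))" unfolding Wp_def power_mult[symmetric]
      by (simp add: algebra_simps)
    have q: "Q^2 = Var 2 ^ (2*(k*n)) + Var 2 ^ (k*n+d) + Var 2 ^ (k*n+d) + Var 2 ^ (2*d)"
      using sq_alg[of "Var 2" "k*n" d] unfolding Q_def .
    have "P = Var 2 ^ 1 + (Var 2 ^ (2*n*p) * (Var 2 ^ (2*(k*n)) + Var 2 ^ (k*n+d) + Var 2 ^ (k*n+d) + Var 2 ^ (2*d)) - Var 2 ^ (2*n*p + 2*(k*n)))"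
      unfolding P_def w1 w2 q by simp
    also have "\<dots> = Var 2 ^ 1 + Var 2 ^ (2*n*p + (k*n+d)) + Var 2 ^ (2*n*p + (k*n+d)) + Var 2 ^ (2*n*p + 2*d)"
      by (rule P_alg)
    finally show ?thesis by (simp add: c_def add.commute add.left_commute)
  qed
  have lF2: "Poly_Mapping.lookup (F 2) (Poly_Mapping.single 2 c) = 2"
  proof -
    have "c \<noteq> 1" "2*n*p + 2*d \<noteq> c" using dk d1 n1 by (auto simp: c_def)
    have "Poly_Mapping.lookup (F 2) (Poly_Mapping.single 2 c) = Poly_Mapping.lookup P (Poly_Mapping.single 2 c)"
      by (rule cong_lookup[OF cP])
    also have "\<dots> = 2" unfolding Peq lookup_add lookup_Zpow using \<open>c \<noteq> 1\<close> \<open>2*n*p + 2*d \<noteq> c\<close> by simp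
    finally show ?thesis .

  qed
  have tF2: "tdeg (F 2) = c"
    using tdeg_le[OF dF2] tdeg_ge[of "F 2" "Poly_Mapping.single 2 c"] lF2 by simp
  have "mdeg3 F = (2*n, k*n, k*n + d + 2*n*p)"
    unfolding mdeg3_def F0 F1 tF0 tF1 tF2 c_def ..
  then show ?thesis using tame by blast
qed




theorem corollary1:
  fixes k n :: nat
  assumes "odd k" and "k \<ge> 3" and "n \<ge> 1" and "2 * n \<ge> k - 1"
  shows "tame_pair (2 * n) (k * n)"
proof -
  define m where "m = k div 2"
  have km: "k = Suc (2*m)" using assms(1) unfolding m_def by presburger
  have m1: "1 \<le> m" using km assms(2) by simp
  have mn: "m \<le> n" using km assms(4) by simp
  have lt: "2 * n < k * n"
  proof -
    have "2 * n < 3 * n" using assms(3) by simp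
    also have "3 * n \<le> k * n" using assms(2) by simp
    finally show ?thesis .
  qed
  have ndvd: "\<not> 2 * n dvd k * n"
  proof
    assume "2 * n dvd k * n"
    then obtain q where "k * n = 2 * n * q" by (auto elim: dvdE)
    then have "k = 2 * q" using assms(3) by (simp add: mult.commute mult.left_commute)
    then show False using assms(1) by simp
  qed
  have all: "\<exists>F. tame3 F \<and> mdeg3 F = (2 * n, k * n, c)" if c: "c > k * n" for c
  proof -
    define t where "t = c - k * n - 1"
    define p where "p = t div (2 * n)"
    define d where "d = t mod (2 * n) + 1"
    have tm: "t mod (2 * n) < 2 * n" using assms(3) by simp
    have d1: "1 \<le> d" unfolding d_def by simp
    have dk: "d < k * n" using tm lt unfolding d_def by linarith
    have ceq: "c = k * n + d + 2 * n * p"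
      using c div_mult_mod_eq[of t "2*n"] unfolding d_def p_def t_def by (simp add: algebra_simps)
    show ?thesis using main[OF km m1 mn d1 dk, of p] unfolding ceq .
  qed
  show ?thesis unfolding tame_pair_def using assms(3) lt ndvd all by auto
qed


end
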